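(* Assume $\langle f\rangle_X=0$ and that $\psi$ satisfies (A1) and (A2), let $u^H$ be the solution of the HQC problem and $u^{H,c}$ its reconstruction. Then for every $k$ and every $X_i\in S_k$, \[ u^{H,c}(X_i)=u^H(X_i)+\epsilon\,\chi(X_{i_k^{\rm coll}},X_i/\epsilon)\,Du^H(X_i). \]
   Context: Let $\epsilon>0$, $N,p$ positive integers, $N\epsilon=1$; $X_i=\epsilon i$, $Y_j=j$. $U^N_{\rm per}(\epsilon\mathbb Z)$: functions $u:\epsilon\mathbb Z\to\mathbb R$ with $u(X_{i+N})=u(X_i)$; $U^N_\#(\epsilon\mathbb Z)$: those with $\langle u\rangle_X:=\frac1N\sum_{i=1}^Nu(X_i)=0$. $\langle u,v\rangle_X=\frac1N\sum_{i=1}^Nu(X_i)v(X_i)$, $Du(X_i)=(u(X_{i+1})-u(X_i))/\epsilon$. $U^p_\#(\epsilon\mathbb Z)$: $p$-periodic functions on $\epsilon\mathbb Z$ with $\sum_{i=1}^pw(X_i)=0$. Two-scale functions $g:\epsilon\mathbb Z\times\mathbb Z\to\mathbb R$ satisfy $g(X_{i+N},Y_j)=g(X_i,Y_j)=g(X_i,Y_{j+p})$; $D_Xg(X_i,Y_j)=(g(X_{i+1},Y_j)-g(X_i,Y_j))/\epsilon$, $D_Yg(X_i,Y_j)=g(X_i,Y_{j+1})-g(X_i,Y_j)$, $\|g\|_{L^\infty(N,p)}=\max_{1\le i\le N,1\le j\le p}|g|$. $\psi$ is a two-scale function with (A1) $0<c_\psi\le\psi\le C_\psi$ and (A2) $\|D_X\psi\|_{L^\infty(N,p)}\le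 C'_\psi$. The cell solution $\chi$ is the two-scale function with $\frac1p\sum_{j=1}^p\chi(X_i,Y_j)=0$ and $-D_Y(\psi D_Y\chi)=D_Y\psi$ everywhere. $f\in U^N_{\rm per}(\epsilon\mathbb Z)$. HQC method: indices $1=i_1<\dots<i_K\le N$, $i_{K+1}=N+1$, $S_k=\{X_i:i_k\le i<i_{k+1}\}$, $H_k=\epsilon(i_{k+1}-i_k)$. $U^H_{\rm per}$: $v\in U^N_{\rm per}(\epsilon\mathbb Z)$ affine on each $\{X_i:i_k\le i\le i_{k+1}\}$; $U^H_\#=U^H_{\rm per}\cap U^N_\#(\epsilon\mathbb Z)$. Sampling domains $S_k^{\rm rep}=\{X_i:i_k^{\rm rep}\le i<i_k^{\rm rep}+p\}\subset S_k$, collocation indices with $X_{i_k^{\rm coll}}\in S_k^{\rm rep}$, $\psi^\epsilon_{{\rm coll},k}(X_i)=\psi(X_{i_k^{\rm coll}},X_i/\epsilon)$, $\langle a,b\rangle_{S_k^{\rm rep}}=\frac1p\sum_{X_i\in S_k^{\rm rep}}a(X_i)b(X_i)$. For $v^H\in U^H_{\rm per}$ let $\ell_k$ be the affine function on $\epsilon\mathbb Z$ equal to $v^H$ on $S_k$; $\mathcal R_k(v^H)=\ell_k+w_k$ with $w_k\in U^p_\#(\epsilon\mathbb Z)$ such that $\langle\psi^\epsilon_{{\rm coll},k}D(\ell_k+w_k),Ds\rangle_{S_k^{\rm rep}}=0$ for all $s\in U^p_\#(\epsilon\mathbb Z)$. HQC problem: $u^H\in U^H_\#$ with $\sum_{k=1}^KH_k\langle\psi^\epsilon_{{\rm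 coll},k}D\mathcal R_k(u^H),D\mathcal R_k(v^H)\rangle_{S_k^{\rm rep}}=\langle f,v^H\rangle_X$ for all $v^H\in U^H_\#$. The reconstruction is $u^{H,c}(X_i)=u^H(X_i)+w_k(X_i)$ for $X_i\in S_k$, with $w_k=\mathcal R_k(u^H)-\ell_k$ computed for $u^H$. *)

theory Defs
  imports Main "HOL.Real"
begin

text \<open>Grid functions on eps Z are represented as functions int => real, u i = u(X_i).
  Two-scale functions are int => int => real, g i j = g(X_i, Y_j).\<close>

definition Dd :: "real \<Rightarrow> (int \<Rightarrow> real) \<Rightarrow> int \<Rightarrow> real" where
  "Dd eps u i = (u (i + 1) - u i) / eps"

definition per :: "int \<Rightarrow> (int \<Rightarrow> real) \<Rightarrow> bool" where
  "per n u = (\<forall>i. u (i + n) = u i)"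

definition meanX :: "nat \<Rightarrow> (int \<Rightarrow> real) \<Rightarrow> real" where
  "meanX N u = (1 / real N) * (\<Sum>i = 1..int N. u i)"

definition innerX :: "nat \<Rightarrow> (int \<Rightarrow> real) \<Rightarrow> (int \<Rightarrow> real) \<Rightarrow> real" where
  "innerX N u v = (1 / real N) * (\<Sum>i = 1..int N. u i * v i)"

definition UNper :: "nat \<Rightarrow> (int \<Rightarrow> real) set" where
  "UNper N = {u. per (int N) u}"

definition UNsharp :: "nat \<Rightarrow> (int \<Rightarrow> real) set" where
  "UNsharp N = {u \<in> UNper N. meanX N u = 0}"

definition Upsharp :: "nat \<Rightarrow> (int \<Rightarrow> real) set" where
  "Upsharp p = {w. per (int p) w \<and> (\<Sum>i = 1..int p. w i) = 0}"

definition twoscale :: "nat \<Rightarrow> nat \<Rightarrow> (int \<Rightarrow> int \<Rightarrow> real) \<Rightarrow> bool" where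
  "twoscale N p g = (\<forall>i j. g (i + int N) j = g i j \<and> g i (j + int p) = g i j)"

definition DX :: "real \<Rightarrow> (int \<Rightarrow> int \<Rightarrow> real) \<Rightarrow> int \<Rightarrow> int \<Rightarrow> real" where
  "DX eps g i j = (g (i + 1) j - g i j) / eps"

definition DY :: "(int \<Rightarrow> int \<Rightarrow> real) \<Rightarrow> int \<Rightarrow> int \<Rightarrow> real" where
  "DY g i j = g i (j + 1) - g i j"

definition Linf :: "nat \<Rightarrow> nat \<Rightarrow> (int \<Rightarrow> int \<Rightarrow> real) \<Rightarrow> real" where
  "Linf N p g = Max {\<bar>g i j\<bar> | i j. i \<in> {1..int N} \<and> j \<in> {1..int p}}"

definition cell_solution :: "nat \<Rightarrow> nat \<Rightarrow> (int \<Rightarrow> int \<Rightarrow> real) \<Rightarrow> (int \<Rightarrow> int \<Rightarrow> real) \<Rightarrow> bool" where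
  "cell_solution N p psi chi =
     (twoscale N p chi \<and>
      (\<forall>i. (1 / real p) * (\<Sum>j = 1..int p. chi i j) = 0) \<and>
      (\<forall>i j. - DY (\<lambda>a b. psi a b * DY chi a b) i j = DY psi i j))"

text \<open>HQC partition: idx k = i_k for k = 1..K+1.\<close>
definition hqc_partition :: "nat \<Rightarrow> nat \<Rightarrow> (nat \<Rightarrow> int) \<Rightarrow> bool" where
  "hqc_partition N K idx =
     (1 \<le> K \<and> idx 1 = 1 \<and> (\<forall>k \<in> {1..K}. idx k < idx (Suc k)) \<and>
      idx K \<le> int N \<and> idx (Suc K) = int N + 1)"

definition Sk :: "(nat \<Rightarrow> int) \<Rightarrow> nat \<Rightarrow> int set" where
  "Sk idx k = {i. idx k \<le> i \<and> i < idx (Suc k)}"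

definition Hk :: "real \<Rightarrow> (nat \<Rightarrow> int) \<Rightarrow> nat \<Rightarrow> real" where
  "Hk eps idx k = eps * real_of_int (idx (Suc k) - idx k)"

definition UHper :: "nat \<Rightarrow> real \<Rightarrow> nat \<Rightarrow> (nat \<Rightarrow> int) \<Rightarrow> (int \<Rightarrow> real) set" where
  "UHper N eps K idx = {v \<in> UNper N. \<forall>k \<in> {1..K}. \<exists>a b. \<forall>i.
      idx k \<le> i \<and> i \<le> idx (Suc k) \<longrightarrow> v i = a + b * (eps * real_of_int i)}"

definition UHsharp :: "nat \<Rightarrow> real \<Rightarrow> nat \<Rightarrow> (nat \<Rightarrow> int) \<Rightarrow> (int \<Rightarrow> real) set" where
  "UHsharp N eps K idx = UHper N eps K idx \<inter> UNsharp N"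

text \<open>Sampling domains S_k^rep = {X_i : irep k <= i < irep k + p} and collocation indices.\<close>
definition sampling :: "nat \<Rightarrow> nat \<Rightarrow> (nat \<Rightarrow> int) \<Rightarrow> (nat \<Rightarrow> int) \<Rightarrow> (nat \<Rightarrow> int) \<Rightarrow> bool" where
  "sampling p K idx irep coll =
     (\<forall>k \<in> {1..K}. idx k \<le> irep k \<and> irep k + int p \<le> idx (Suc k) \<and>
                    irep k \<le> coll k \<and> coll k < irep k + int p)"

definition inner_rep :: "nat \<Rightarrow> (nat \<Rightarrow> int) \<Rightarrow> nat \<Rightarrow> (int \<Rightarrow> real) \<Rightarrow> (int \<Rightarrow> real) \<Rightarrow> real" where
  "inner_rep p irep k a b = (1 / real p) * (\<Sum>i = irep k..irep k + int p - 1. a i * b i)"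

text \<open>psi_coll,k(X_i) = psi(X_{coll k}, X_i/eps) = psi (coll k) i.\<close>
definition psi_coll :: "(int \<Rightarrow> int \<Rightarrow> real) \<Rightarrow> (nat \<Rightarrow> int) \<Rightarrow> nat \<Rightarrow> int \<Rightarrow> real" where
  "psi_coll psi coll k i = psi (coll k) i"

definition ell :: "(nat \<Rightarrow> int) \<Rightarrow> (int \<Rightarrow> real) \<Rightarrow> nat \<Rightarrow> int \<Rightarrow> real" where
  "ell idx v k i = v (idx k) + real_of_int (i - idx k) *
      (v (idx (Suc k)) - v (idx k)) / real_of_int (idx (Suc k) - idx k)"

definition corrector :: "real \<Rightarrow> nat \<Rightarrow> (int \<Rightarrow> int \<Rightarrow> real) \<Rightarrow> (nat \<Rightarrow> int) \<Rightarrow> (nat \<Rightarrow> int)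
    \<Rightarrow> (nat \<Rightarrow> int) \<Rightarrow> nat \<Rightarrow> (int \<Rightarrow> real) \<Rightarrow> int \<Rightarrow> real" where
  "corrector eps p psi idx irep coll k v =
     (THE w. w \<in> Upsharp p \<and>
        (\<forall>s \<in> Upsharp p. inner_rep p irep k
            (\<lambda>i. psi_coll psi coll k i * Dd eps (\<lambda>j. ell idx v k j + w j) i) (Dd eps s) = 0))"

definition Rk :: "real \<Rightarrow> nat \<Rightarrow> (int \<Rightarrow> int \<Rightarrow> real) \<Rightarrow> (nat \<Rightarrow> int) \<Rightarrow> (nat \<Rightarrow> int)
    \<Rightarrow> (nat \<Rightarrow> int) \<Rightarrow> nat \<Rightarrow> (int \<Rightarrow> real) \<Rightarrow> int \<Rightarrow> real" where
  "Rk eps p psi idx irep coll k v i = ell idx v k i + corrector eps p psi idx irep coll k v i"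

definition hqc_solution :: "nat \<Rightarrow> real \<Rightarrow> nat \<Rightarrow> (int \<Rightarrow> int \<Rightarrow> real) \<Rightarrow> nat \<Rightarrow> (nat \<Rightarrow> int)
    \<Rightarrow> (nat \<Rightarrow> int) \<Rightarrow> (nat \<Rightarrow> int) \<Rightarrow> (int \<Rightarrow> real) \<Rightarrow> (int \<Rightarrow> real) \<Rightarrow> bool" where
  "hqc_solution N eps p psi K idx irep coll f u =
     (u \<in> UHsharp N eps K idx \<and>
      (\<forall>v \<in> UHsharp N eps K idx.
         (\<Sum>k = 1..K. Hk eps idx k *
            inner_rep p irep k
              (\<lambda>i. psi_coll psi coll k i * Dd eps (Rk eps p psi idx irep coll k u) i)
              (Dd eps (Rk eps p psi idx irep coll k v))) = innerX N f v))"

definition recon :: "real \<Rightarrow> nat \<Rightarrow> (int \<Rightarrow> int \<Rightarrow> real) \<Rightarrow> nat \<Rightarrow> (nat \<Rightarrow> int) \<Rightarrow> (nat \<Rightarrow> int)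
    \<Rightarrow> (nat \<Rightarrow> int) \<Rightarrow> (int \<Rightarrow> real) \<Rightarrow> int \<Rightarrow> real" where
  "recon eps p psi K idx irep coll u i =
     u i + corrector eps p psi idx irep coll (THE k. k \<in> {1..K} \<and> i \<in> Sk idx k) u i"

end

theory Submission
  imports Defs
begin

lemma per_mult:
  assumes "per n u" shows "u (i + m * n) = u i"
proof (induct m rule: int_induct[where k=0])
  case base then show ?case by simp
next
  case (step1 m)
  have "u (i + (m+1)*n) = u ((i + m*n) + n)" by (simp add: algebra_simps)
  also have "\<dots> = u (i + m*n)" using assms unfolding per_def by blast
  finally show ?case using step1 by simp
next
  case (step2 m)
  have "u (i + m*n) = u ((i + (m-1)*n) + n)" by (simp add: algebra_simps)
  also have "\<dots> = u (i + (m-1)*n)" using assms unfolding per_def by blast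
  finally show ?case using step2 by simp
qed

lemma const_int:
  assumes "\<forall>j. g (j+1) = g (j::int)" shows "g j = g 0"
proof (induct j rule: int_induct[where k=0])
  case base then show ?case by simp
next
  case (step1 m) then show ?case using assms by metis
next
  case (step2 m) then show ?case using assms[rule_format, of "m-1"] by simp
qed

lemma telescope:
  "(\<Sum>i = r..r + int m - 1. (s (i+1) - s i)) = s (r + int m) - (s r :: real)"
proof (induct m)
  case 0 then show ?case by simp
next
  case (Suc m)
  have "{r..r + int (Suc m) - 1} = insert (r + int m) {r..r + int m - 1}" by auto
  moreover have "r + int m \<notin> {r..r + int m - 1}" by auto
  ultimately show ?case using Suc by (simp add: algebra_simps)
qed

lemma corr_unique:
  assumes eps: "eps > 0" and p: "p > 0" and pos: "\<forall>i j. psi i j > 0"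
    and wa: "wa \<in> Upsharp p"
    and o1: "\<forall>s \<in> Upsharp p. inner_rep p irep k
            (\<lambda>i. psi_coll psi coll k i * Dd eps (\<lambda>j. L j + wa j) i) (Dd eps s) = 0"
    and wb: "wb \<in> Upsharp p"
    and o2: "\<forall>s \<in> Upsharp p. inner_rep p irep k
            (\<lambda>i. psi_coll psi coll k i * Dd eps (\<lambda>j. L j + wb j) i) (Dd eps s) = 0"
  shows "wa = wb"
proof -
  define d where "d = (\<lambda>j. wa j - wb j)"
  have dU: "d \<in> Upsharp p" using wa wb unfolding Upsharp_def per_def d_def
    by (simp add: sum_subtractf)
  let ?r = "irep k"
  let ?I = "{?r..?r + int p - 1}"
  have "inner_rep p irep k (\<lambda>i. psi_coll psi coll k i * Dd eps (\<lambda>j. L j + wa j) i) (Dd eps d)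
      - inner_rep p irep k (\<lambda>i. psi_coll psi coll k i * Dd eps (\<lambda>j. L j + wb j) i) (Dd eps d) = 0"
    using o1 o2 dU by simp
  moreover have "inner_rep p irep k (\<lambda>i. psi_coll psi coll k i * Dd eps (\<lambda>j. L j + wa j) i) (Dd eps d)
      - inner_rep p irep k (\<lambda>i. psi_coll psi coll k i * Dd eps (\<lambda>j. L j + wb j) i) (Dd eps d)
      = (1 / real p) * (\<Sum>i\<in>?I. psi_coll psi coll k i * (Dd eps d i)^2)"
  proof -
    have t: "\<And>i. psi_coll psi coll k i * Dd eps (\<lambda>j. L j + wa j) i * Dd eps d i
       - psi_coll psi coll k i * Dd eps (\<lambda>j. L j + wb j) i * Dd eps d i
       = psi_coll psi coll k i * (Dd eps d i)^2"
    proof -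
      fix i
      have "Dd eps (\<lambda>j. L j + wa j) i - Dd eps (\<lambda>j. L j + wb j) i = Dd eps d i"
        unfolding Dd_def d_def by (simp add: diff_divide_distrib[symmetric] algebra_simps)
      then show "?thesis i" by (metis power2_eq_square right_diff_distrib mult.assoc left_diff_distrib)
    qed
    show ?thesis unfolding inner_rep_def right_diff_distrib[symmetric] sum_subtractf[symmetric] t
      by simp
  qed
  ultimately have S: "(\<Sum>i\<in>?I. psi_coll psi coll k i * (Dd eps d i)^2) = 0" using p by simp
  have nn: "\<forall>i\<in>?I. 0 \<le> psi_coll psi coll k i * (Dd eps d i)^2"
    using pos unfolding psi_coll_def by (simp add: less_imp_le)
  have z: "\<forall>i\<in>?I. psi_coll psi coll k i * (Dd eps d i)^2 = 0"
    using sum_nonneg_eq_0_iff[of ?I "\<lambda>i. psi_coll psi coll k i * (Dd eps d i)^2"] S nn by blast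
  have dz: "\<forall>i\<in>?I. d (i+1) = d i"
  proof
    fix i assume "i \<in> ?I"
    then have "psi_coll psi coll k i * (Dd eps d i)^2 = 0" using z by blast
    moreover have "psi_coll psi coll k i > 0" using pos unfolding psi_coll_def by simp
    ultimately have "Dd eps d i = 0" by simp
    then show "d (i+1) = d i" using eps unfolding Dd_def by simp
  qed
  have dper: "per (int p) d" using dU unfolding Upsharp_def by simp
  have step: "\<forall>j. d (j+1) = d j"
  proof
    fix j
    define j' where "j' = ?r + (j - ?r) mod int p"
    define m where "m = (j - ?r) div int p"
    have jj: "j = j' + m * int p" unfolding j'_def m_def
      by (metis add.commute add.left_commute diff_add_cancel minus_mod_eq_mult_div mult.commute)
    have "j' \<in> ?I" unfolding j'_def using p
      by (simp add: pos_mod_bound pos_mod_sign)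
    have "d (j+1) = d ((j'+1) + m * int p)" using jj by (simp add: algebra_simps)
    also have "\<dots> = d (j'+1)" using per_mult[OF dper] by blast
    also have "\<dots> = d j'" using dz \<open>j' \<in> ?I\<close> by blast
    also have "\<dots> = d j" using jj per_mult[OF dper] by metis
    finally show "d (j+1) = d j" .
  qed
  have dc: "\<forall>j. d j = d 0" using const_int[OF step] by blast
  have "(\<Sum>i = 1..int p. d i) = 0" using dU unfolding Upsharp_def by simp
  moreover have "(\<Sum>i = 1..int p. d i) = (\<Sum>i = 1..int p. d 0)"
    by (rule sum.cong) (use dc in auto)
  ultimately have "real p * d 0 = 0" by simp
  then have "d 0 = 0" using p by simp
  then have "\<forall>j. d j = 0" using dc by simp
  then show ?thesis unfolding d_def by auto
qed

lemma idx_mono: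
  assumes part: "hqc_partition N K idx"
  shows "1 \<le> m \<Longrightarrow> m \<le> n \<Longrightarrow> n \<le> Suc K \<Longrightarrow> idx m \<le> idx n"
proof (induct n)
  case 0 then show ?case by simp
next
  case (Suc n)
  show ?case
  proof (cases "m = Suc n")
    case True then show ?thesis by simp
  next
    case False
    then have "m \<le> n" using Suc by simp
    then have "idx m \<le> idx n" using Suc by simp
    moreover have "idx n < idx (Suc n)" using part Suc \<open>m \<le> n\<close> unfolding hqc_partition_def by auto
    ultimately show ?thesis by simp
  qed
qed

theorem lemma6p5:
  fixes N p K :: nat and eps c_psi C_psi C'_psi :: real
    and psi chi :: "int \<Rightarrow> int \<Rightarrow> real" and f u :: "int \<Rightarrow> real"
    and idx irep coll :: "nat \<Rightarrow> int"
  assumes eps_pos: "eps > 0" and N_pos: "N > 0" and p_pos: "p > 0"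
    and Neps: "real N * eps = 1"
    and psi_ts: "twoscale N p psi"
    and A1: "0 < c_psi" "\<forall>i j. c_psi \<le> psi i j \<and> psi i j \<le> C_psi"
    and A2: "Linf N p (DX eps psi) \<le> C'_psi"
    and chi: "cell_solution N p psi chi"
    and f_per: "f \<in> UNper N" and f_mean: "meanX N f = 0"
    and part: "hqc_partition N K idx"
    and samp: "sampling p K idx irep coll"
    and sol: "hqc_solution N eps p psi K idx irep coll f u"
  shows "\<forall>k \<in> {1..K}. \<forall>i \<in> Sk idx k.
           recon eps p psi K idx irep coll u i = u i + eps * chi (coll k) i * Dd eps u i"
proof (intro ballI)
  fix k i assume k: "k \<in> {1..K}" and i: "i \<in> Sk idx k"
  have pos: "\<forall>i j. psi i j > 0" using A1 by (meson less_le_trans)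
  have uH: "u \<in> UHper N eps K idx" using sol unfolding hqc_solution_def UHsharp_def by simp
  then obtain a b where ab: "\<forall>j. idx k \<le> j \<and> j \<le> idx (Suc k) \<longrightarrow> u j = a + b * (eps * real_of_int j)"
    using k unfolding UHper_def by blast
  have lt: "idx k < idx (Suc k)" using part k unfolding hqc_partition_def by auto
  have Du: "Dd eps u i = b"
  proof -
    have "u (i+1) = a + b * (eps * real_of_int (i+1))" using ab i unfolding Sk_def by auto
    moreover have "u i = a + b * (eps * real_of_int i)" using ab i unfolding Sk_def by auto
    ultimately show ?thesis using eps_pos unfolding Dd_def by (simp add: algebra_simps)
  qed
  have theK: "(THE k'. k' \<in> {1..K} \<and> i \<in> Sk idx k') = k"
  proof (rule the_equality)
    show "k \<in> {1..K} \<and> i \<in> Sk idx k" using k i by simp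
  next
    fix k' assume h: "k' \<in> {1..K} \<and> i \<in> Sk idx k'"
    show "k' = k"
    proof (rule ccontr)
      assume "k' \<noteq> k"
      then consider "k' < k" | "k < k'" by linarith
      then show False
      proof cases
        case 1
        have "idx (Suc k') \<le> idx k" using idx_mono[OF part, of "Suc k'" k] 1 k by auto
        then show False using h i unfolding Sk_def by auto
      next
        case 2
        have "idx (Suc k) \<le> idx k'" using idx_mono[OF part, of "Suc k" k'] 2 h by auto
        then show False using h i unfolding Sk_def by auto
      qed
    qed
  qed
  define w where "w = (\<lambda>j. eps * b * chi (coll k) j)"
  have chi_ts: "twoscale N p chi" and chi_mean: "\<forall>i. (1 / real p) * (\<Sum>j = 1..int p. chi i j) = 0"
    and chi_eq: "\<forall>i j. - DY (\<lambda>a b. psi a b * DY chi a b) i j = DY psi i j"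
    using chi unfolding cell_solution_def by auto
  have wU: "w \<in> Upsharp p"
  proof -
    have "per (int p) w" using chi_ts unfolding per_def twoscale_def w_def by simp
    moreover have "(\<Sum>j = 1..int p. chi (coll k) j) = 0" using chi_mean p_pos by simp
    then have "(\<Sum>j = 1..int p. w j) = 0" unfolding w_def by (simp add: sum_distrib_left[symmetric])
    ultimately show ?thesis unfolding Upsharp_def by simp
  qed
  have ellD: "\<forall>j. Dd eps (ell idx u k) j = b"
  proof
    fix j
    have e1: "u (idx (Suc k)) - u (idx k) = b * eps * real_of_int (idx (Suc k) - idx k)"
      using ab lt by (simp add: algebra_simps)
    have "ell idx u k j = u (idx k) + real_of_int (j - idx k) * b * eps"
      unfolding ell_def e1 using lt by simp
    moreover have "ell idx u k (j+1) = u (idx k) + real_of_int (j + 1 - idx k) * b * eps"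
      unfolding ell_def e1 using lt by simp
    ultimately have "ell idx u k (j+1) - ell idx u k j = b * eps" by (simp add: algebra_simps)
    then show "Dd eps (ell idx u k) j = b" unfolding Dd_def using eps_pos by simp
  qed
  define g where "g = (\<lambda>j. psi (coll k) j * (1 + DY chi (coll k) j))"
  have gstep: "\<forall>j. g (j+1) = g j"
  proof
    fix j show "g (j+1) = g j"
      using chi_eq[rule_format, of "coll k" j] unfolding g_def DY_def by (simp add: algebra_simps)
  qed
  have gc: "\<forall>j. g j = g 0" using const_int[OF gstep] by blast
  have orth: "\<forall>s \<in> Upsharp p. inner_rep p irep k
            (\<lambda>i. psi_coll psi coll k i * Dd eps (\<lambda>j. ell idx u k j + w j) i) (Dd eps s) = 0"
  proof
    fix s assume s: "s \<in> Upsharp p"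
    have D: "\<And>j. psi_coll psi coll k j * Dd eps (\<lambda>j. ell idx u k j + w j) j = b * g 0"
    proof -
      fix j
      have "Dd eps (\<lambda>j. ell idx u k j + w j) j = Dd eps (ell idx u k) j + b * DY chi (coll k) j"
        unfolding Dd_def w_def DY_def using eps_pos by (simp add: field_simps)
      then have "psi_coll psi coll k j * Dd eps (\<lambda>j. ell idx u k j + w j) j = b * g j"
        using ellD unfolding g_def psi_coll_def by (simp add: algebra_simps)
      then show "psi_coll psi coll k j * Dd eps (\<lambda>j. ell idx u k j + w j) j = b * g 0"
        using gc by simp
    qed
    have sp: "s (irep k + int p) = s (irep k)" using s unfolding Upsharp_def per_def by simp
    have "(\<Sum>i = irep k..irep k + int p - 1. b * g 0 * Dd eps s i)
        = b * g 0 / eps * (\<Sum>i = irep k..irep k + int p - 1. (s (i+1) - s i))"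
      unfolding Dd_def by (simp add: sum_distrib_left)
    also have "\<dots> = 0" using telescope[where r="irep k" and m=p and s=s] sp by simp
    finally show "inner_rep p irep k
            (\<lambda>i. psi_coll psi coll k i * Dd eps (\<lambda>j. ell idx u k j + w j) i) (Dd eps s) = 0"
      unfolding inner_rep_def D by simp
  qed
  have corr: "corrector eps p psi idx irep coll k u = w"
    unfolding corrector_def
  proof (rule the_equality)
    show "w \<in> Upsharp p \<and> (\<forall>s \<in> Upsharp p. inner_rep p irep k
            (\<lambda>i. psi_coll psi coll k i * Dd eps (\<lambda>j. ell idx u k j + w j) i) (Dd eps s) = 0)"
      using wU orth by simp
  next
    fix w' assume h: "w' \<in> Upsharp p \<and> (\<forall>s \<in> Upsharp p. inner_rep p irep k
            (\<lambda>i. psi_coll psi coll k i * Dd eps (\<lambda>j. ell idx u k j + w' j) i) (Dd eps s) = 0)"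
    show "w' = w" using corr_unique[OF eps_pos p_pos pos, where wa=w' and irep=irep and k=k and coll=coll and L="ell idx u k" and wb=w]
      h wU orth by blast
  qed
  show "recon eps p psi K idx irep coll u i = u i + eps * chi (coll k) i * Dd eps u i"
    unfolding recon_def theK corr Du w_def by simp
qed

end
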